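(* For every pair $(k,\ell)$ of positive integers and every prime power $q$, there are only finitely many (up to isomorphism) simple, cosimple, $GF(q)$-representable matroids that are $(k,\ell)$-uniform.
   Context: For positive integers $k,\ell$, a matroid is called $(k,\ell)$-uniform if it has no minor isomorphic to $U_{k,k}\oplus U_{0,\ell}$ (the direct sum of a $k$-element free matroid and $\ell$ loops). A matroid is cosimple if its dual is simple. *)

theory Defs
  imports Main
begin

definition matroid :: "'a set \<Rightarrow> ('a set \<Rightarrow> bool) \<Rightarrow> bool" where
  "matroid E I \<longleftrightarrow> finite E \<and> I {} \<and> (\<forall>X. I X \<longrightarrow> X \<subseteq> E)
     \<and> (\<forall>X Y. I Y \<and> X \<subseteq> Y \<longrightarrow> I X)
     \<and> (\<forall>X Y. I X \<and> I Y \<and> card X < card Y \<longrightarrow> (\<exists>y\<in>Y - X. I (insert y X)))"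

definition mrank :: "('a set \<Rightarrow> bool) \<Rightarrow> 'a set \<Rightarrow> nat" where
  "mrank I X = Max (card ` {Y. Y \<subseteq> X \<and> I Y})"

text \<open>Independent sets of the minor M / C \ D (ground set E - C - D).\<close>
definition minor_indep :: "'a set \<Rightarrow> ('a set \<Rightarrow> bool) \<Rightarrow> 'a set \<Rightarrow> 'a set \<Rightarrow> 'a set \<Rightarrow> bool" where
  "minor_indep E I C D X \<longleftrightarrow> X \<subseteq> E - C - D \<and> mrank I (X \<union> C) = card X + mrank I C"

definition matroid_iso :: "'a set \<Rightarrow> ('a set \<Rightarrow> bool) \<Rightarrow> 'b set \<Rightarrow> ('b set \<Rightarrow> bool) \<Rightarrow> bool" where
  "matroid_iso E1 I1 E2 I2 \<longleftrightarrow>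
     (\<exists>f. bij_betw f E1 E2 \<and> (\<forall>X. X \<subseteq> E1 \<longrightarrow> (I1 X \<longleftrightarrow> I2 (f ` X))))"

definition has_minor_iso :: "'a set \<Rightarrow> ('a set \<Rightarrow> bool) \<Rightarrow> 'b set \<Rightarrow> ('b set \<Rightarrow> bool) \<Rightarrow> bool" where
  "has_minor_iso E I E' I' \<longleftrightarrow>
     (\<exists>C D. C \<subseteq> E \<and> D \<subseteq> E \<and> C \<inter> D = {} \<and>
        matroid_iso (E - C - D) (minor_indep E I C D) E' I')"

text \<open>U_{k,k} direct sum U_{0,l}: k coloops {0..<k} and l loops {k..<k+l}.\<close>
definition free_plus_loops_ground :: "nat \<Rightarrow> nat \<Rightarrow> nat set" where
  "free_plus_loops_ground k l = {..<k + l}"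

definition free_plus_loops_indep :: "nat \<Rightarrow> nat \<Rightarrow> nat set \<Rightarrow> bool" where
  "free_plus_loops_indep k l X \<longleftrightarrow> X \<subseteq> {..<k}"

definition kl_uniform :: "nat \<Rightarrow> nat \<Rightarrow> 'a set \<Rightarrow> ('a set \<Rightarrow> bool) \<Rightarrow> bool" where
  "kl_uniform k l E I \<longleftrightarrow>
     \<not> has_minor_iso E I (free_plus_loops_ground k l) (free_plus_loops_indep k l)"

text \<open>Simple: no loops and no parallel pairs, i.e. all sets of size at most 2 are independent.\<close>
definition simple_matroid :: "'a set \<Rightarrow> ('a set \<Rightarrow> bool) \<Rightarrow> bool" where
  "simple_matroid E I \<longleftrightarrow> (\<forall>X. X \<subseteq> E \<and> card X \<le> 2 \<longrightarrow> I X)"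

definition is_basis :: "('a set \<Rightarrow> bool) \<Rightarrow> 'a set \<Rightarrow> bool" where
  "is_basis I B \<longleftrightarrow> I B \<and> (\<forall>Y. I Y \<and> B \<subseteq> Y \<longrightarrow> Y = B)"

definition dual_indep :: "'a set \<Rightarrow> ('a set \<Rightarrow> bool) \<Rightarrow> 'a set \<Rightarrow> bool" where
  "dual_indep E I X \<longleftrightarrow> X \<subseteq> E \<and> (\<exists>B. is_basis I B \<and> X \<inter> B = {})"

definition cosimple_matroid :: "'a set \<Rightarrow> ('a set \<Rightarrow> bool) \<Rightarrow> bool" where
  "cosimple_matroid E I \<longleftrightarrow> simple_matroid E (dual_indep E I)"

definition lin_indep_family :: "('a \<Rightarrow> nat \<Rightarrow> 'f::field) \<Rightarrow> 'a set \<Rightarrow> bool" where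
  "lin_indep_family v X \<longleftrightarrow>
     (\<forall>c. (\<forall>i. (\<Sum>x\<in>X. c x * v x i) = 0) \<longrightarrow> (\<forall>x\<in>X. c x = 0))"

definition represents :: "('a \<Rightarrow> nat \<Rightarrow> 'f::field) \<Rightarrow> 'a set \<Rightarrow> ('a set \<Rightarrow> bool) \<Rightarrow> bool" where
  "represents v E I \<longleftrightarrow> (\<forall>X. X \<subseteq> E \<longrightarrow> (I X \<longleftrightarrow> lin_indep_family v X))"

end

theory Submission
  imports Defs "HOL-Library.FuncSet"
begin


lemma mrank_indep:
  assumes "matroid E I" "I S"
  shows "mrank I S = card S"
proof -
  have fin: "finite S" using assms unfolding matroid_def by (meson finite_subset)
  have A: "finite (card ` {Y. Y \<subseteq> S \<and> I Y})" using fin by simp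
  have "card S \<in> card ` {Y. Y \<subseteq> S \<and> I Y}" using assms(2) by blast
  moreover have "\<forall>n\<in>card ` {Y. Y \<subseteq> S \<and> I Y}. n \<le> card S" using fin card_mono by blast
  ultimately show ?thesis unfolding mrank_def using A by (meson Max_eqI)
qed

lemma mrank_lt:
  assumes "matroid E I" "finite S" "\<not> I S"
  shows "mrank I S < card S"
proof -
  have A: "finite (card ` {Y. Y \<subseteq> S \<and> I Y})" using assms by simp
  have ne: "card ` {Y. Y \<subseteq> S \<and> I Y} \<noteq> {}" using assms unfolding matroid_def by blast
  obtain T where T: "T \<subseteq> S" "I T" "mrank I S = card T"
    using Max_in[OF A ne] unfolding mrank_def by auto
  then have "T \<subset> S" using assms(3) by blast
  then show ?thesis using T assms(2) psubset_card_mono by metis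
qed

lemma minor_lemma:
  assumes M: "matroid E I" and sub: "C \<subseteq> E" "X \<subseteq> E" "Y \<subseteq> E"
    and disj: "C \<inter> X = {}" "C \<inter> Y = {}" "X \<inter> Y = {}"
    and cX: "card X = k" and cY: "card Y = l" and ind: "I (C \<union> X)"
    and dep: "\<forall>y\<in>Y. \<not> I (insert y C)"
  shows "\<not> kl_uniform k l E I"
proof -
  have finE: "finite E" using M unfolding matroid_def by blast
  have down: "\<And>A B. I B \<Longrightarrow> A \<subseteq> B \<Longrightarrow> I A" using M unfolding matroid_def by blast
  have fX: "finite X" "finite Y" "finite C" using sub finE by (auto intro: finite_subset)
  define D where "D = E - C - X - Y"
  have ECD: "E - C - D = X \<union> Y" using sub disj unfolding D_def by blast
  obtain fx where fx: "bij_betw fx X {0..<k}" using ex_bij_betw_finite_nat[OF fX(1)] cX by auto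
  obtain fy0 where fy0: "bij_betw fy0 Y {0..<l}" using ex_bij_betw_finite_nat[OF fX(2)] cY by auto
  have sh: "bij_betw (\<lambda>n. n + k) {0..<l} {k..<k+l}"
    unfolding bij_betw_def inj_on_def image_def
    by (auto, rule_tac x="x - k" in bexI, auto)
  have fy: "bij_betw (\<lambda>y. fy0 y + k) Y {k..<k+l}"
    using bij_betw_trans[OF fy0 sh] by (simp add: comp_def)
  define f where "f = (\<lambda>z. if z \<in> X then fx z else fy0 z + k)"
  have b1: "bij_betw f X {0..<k}" using fx by (rule bij_betw_cong[THEN iffD1, rotated]) (simp add: f_def)
  have b2: "bij_betw f Y {k..<k+l}" using fy
    by (rule bij_betw_cong[THEN iffD1, rotated]) (use disj in \<open>auto simp: f_def\<close>)
  have bij: "bij_betw f (X \<union> Y) {..<k+l}"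
  proof -
    have "bij_betw f (X \<union> Y) ({0..<k} \<union> {k..<k+l})" using bij_betw_combine[OF b1 b2] by auto
    moreover have "{0..<k} \<union> {k..<k+l} = {..<k+l}" by auto
    ultimately show ?thesis by simp
  qed
  have mC: "mrank I C = card C" using mrank_indep[OF M] ind down by blast
  have key: "minor_indep E I C D W \<longleftrightarrow> free_plus_loops_indep k l (f ` W)" if W: "W \<subseteq> X \<union> Y" for W
  proof -
    have fW: "finite W" using W fX finite_subset by blast
    have dWC: "W \<inter> C = {}" using W disj by blast
    have "f ` W \<subseteq> {..<k} \<longleftrightarrow> W \<subseteq> X"
    proof
      assume a: "f ` W \<subseteq> {..<k}"
      show "W \<subseteq> X"
      proof
        fix w assume "w \<in> W"
        show "w \<in> X"
        proof (rule ccontr)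
          assume "w \<notin> X" then have "w \<in> Y" using \<open>w\<in>W\<close> W by blast
          then have "f w \<in> {k..<k+l}" using b2 by (auto simp: bij_betw_def)
          then show False using a \<open>w\<in>W\<close> by auto
        qed
      qed
    next
      assume "W \<subseteq> X" then show "f ` W \<subseteq> {..<k}" using b1 unfolding bij_betw_def by (metis atLeast0LessThan image_mono)
    qed
    moreover have "mrank I (W \<union> C) = card W + mrank I C \<longleftrightarrow> W \<subseteq> X"
    proof
      assume "W \<subseteq> X"
      then have "I (W \<union> C)" using ind down by blast
      then show "mrank I (W \<union> C) = card W + mrank I C"
        using mrank_indep[OF M] mC card_Un_disjoint[OF fW fX(3) dWC] by simp
    next
      assume a: "mrank I (W \<union> C) = card W + mrank I C"
      show "W \<subseteq> X"
      proof (rule ccontr)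
        assume "\<not> W \<subseteq> X"
        then obtain y where "y \<in> W" "y \<in> Y" using W by blast
        then have "\<not> I (W \<union> C)" using dep down by blast
        then have "mrank I (W \<union> C) < card (W \<union> C)" using mrank_lt[OF M] fW fX by simp
        then show False using a mC card_Un_disjoint[OF fW fX(3) dWC] by simp
      qed
    qed
    ultimately show ?thesis unfolding minor_indep_def free_plus_loops_indep_def ECD using W by blast
  qed
  have "has_minor_iso E I (free_plus_loops_ground k l) (free_plus_loops_indep k l)"
    unfolding has_minor_iso_def matroid_iso_def free_plus_loops_ground_def
    apply (rule exI[of _ C], rule exI[of _ D])
    using sub disj bij key ECD unfolding D_def by auto
  then show ?thesis unfolding kl_uniform_def by blast
qed

lemma augment:
  assumes M: "matroid E I" and "I C" "I B" "card C + k \<le> card B"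
  shows "\<exists>X. X \<subseteq> B - C \<and> card X = k \<and> I (C \<union> X)"
  using assms(4)
proof (induction k)
  case 0 then show ?case using assms(2) by auto
next
  case (Suc k)
  then obtain X where X: "X \<subseteq> B - C" "card X = k" "I (C \<union> X)" by auto
  have finE: "finite E" using M unfolding matroid_def by blast
  have sE: "C \<subseteq> E" "B \<subseteq> E" using M assms(2,3) unfolding matroid_def by auto
  have fin: "finite C" "finite B" using sE finE by (auto intro: finite_subset)
  have fX: "finite X" using X(1) fin(2) by (auto intro: finite_subset)
  have dCX: "C \<inter> X = {}" using X(1) by blast
  have "card (C \<union> X) = card C + k" using card_Un_disjoint[OF fin(1) fX dCX] X(2) by simp
  then have "card (C \<union> X) < card B" using Suc by simp
  then obtain y where y: "y \<in> B - (C \<union> X)" "I (insert y (C \<union> X))"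
    using M X(3) assms(3) unfolding matroid_def by blast
  have "insert y X \<subseteq> B - C" using y X(1) by blast
  moreover have "card (insert y X) = Suc k" using y X(2) fX by simp
  moreover have "I (C \<union> insert y X)" using y(2) by (simp add: Un_insert_right)
  ultimately show ?case by (intro exI[of _ "insert y X"]) simp
qed



lemma dep_of_rep:
  fixes v :: "'a \<Rightarrow> nat \<Rightarrow> 'f::field"
  assumes "finite S" "y \<notin> S" "\<forall>i. v y i = (\<Sum>s\<in>S. c s * v s i)"
  shows "\<not> lin_indep_family v (insert y S)"
proof
  assume h: "lin_indep_family v (insert y S)"
  define d where "d = (\<lambda>z. if z = y then -1 else c z)"
  have "\<forall>i. (\<Sum>z\<in>insert y S. d z * v z i) = 0"
  proof
    fix i
    have "(\<Sum>z\<in>insert y S. d z * v z i) = d y * v y i + (\<Sum>z\<in>S. d z * v z i)"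
      using assms by (simp add: sum.insert)
    also have "(\<Sum>z\<in>S. d z * v z i) = (\<Sum>z\<in>S. c z * v z i)"
      using assms(2) by (intro sum.cong) (auto simp: d_def)
    finally show "(\<Sum>z\<in>insert y S. d z * v z i) = 0" using assms(3) by (simp add: d_def)
  qed
  then have "d y = 0" using h unfolding lin_indep_family_def by blast
  then show False by (simp add: d_def)
qed

lemma rep_of_dep:
  fixes v :: "'a \<Rightarrow> nat \<Rightarrow> 'f::field"
  assumes fin: "finite B" and ind: "lin_indep_family v B" and x: "x \<notin> B"
    and dep: "\<not> lin_indep_family v (insert x B)"
  shows "\<exists>c. \<forall>i. v x i = (\<Sum>b\<in>B. c b * v b i)"
proof -
  obtain c z where c: "\<forall>i. (\<Sum>z\<in>insert x B. c z * v z i) = 0" and z: "z \<in> insert x B" "c z \<noteq> 0"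
    using dep unfolding lin_indep_family_def by blast
  have eq: "c x * v x i + (\<Sum>b\<in>B. c b * v b i) = 0" for i
    using c fin x by (simp add: sum.insert)
  have cx: "c x \<noteq> 0"
  proof
    assume "c x = 0"
    then have "\<forall>i. (\<Sum>b\<in>B. c b * v b i) = 0" using eq by simp
    then have "\<forall>b\<in>B. c b = 0" using ind unfolding lin_indep_family_def by blast
    then show False using z \<open>c x = 0\<close> by auto
  qed
  show ?thesis
  proof (intro exI allI)
    fix i
    have "(\<Sum>b\<in>B. (- c b / c x) * v b i) = - (\<Sum>b\<in>B. c b * v b i) / c x"
      by (simp add: sum_divide_distrib sum_negf[symmetric])
    also have "\<dots> = v x i" using eq[of i] cx by (simp add: field_simps add_eq_0_iff)
    finally show "v x i = (\<Sum>b\<in>B. (- c b / c x) * v b i)" by simp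
  qed
qed

lemma rep_uniq:
  fixes v :: "'a \<Rightarrow> nat \<Rightarrow> 'f::field"
  assumes ind: "lin_indep_family v B" and fin: "finite B"
    and eq: "\<forall>i. (\<Sum>b\<in>B. \<alpha> b * v b i) = (\<Sum>b\<in>B. \<beta> b * v b i)"
  shows "\<forall>b\<in>B. \<alpha> b = \<beta> b"
proof -
  have "\<forall>i. (\<Sum>b\<in>B. (\<alpha> b - \<beta> b) * v b i) = 0"
    using eq by (simp add: left_diff_distrib sum_subtractf)
  then show ?thesis using ind unfolding lin_indep_family_def by auto
qed



lemma card_restrict_image:
  fixes g :: "'c \<Rightarrow> 'b \<Rightarrow> 'f::finite"
  assumes "finite A"
  shows "card ((\<lambda>x. restrict (g x) A) ` S) \<le> card (UNIV :: 'f set) ^ card A"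
proof -
  have sub: "(\<lambda>x. restrict (g x) A) ` S \<subseteq> PiE A (\<lambda>_. UNIV)" by auto
  have fin: "finite (PiE A (\<lambda>_. (UNIV :: 'f set)))" using assms by (simp add: finite_PiE)
  have "card ((\<lambda>x. restrict (g x) A) ` S) \<le> card (PiE A (\<lambda>_. (UNIV :: 'f set)))"
    using card_mono[OF fin sub] .
  also have "\<dots> = card (UNIV :: 'f set) ^ card A" using assms by (simp add: card_PiE)
  finally show ?thesis .
qed

locale msetup =
  fixes E :: "'a set" and I :: "'a set \<Rightarrow> bool" and v :: "'a \<Rightarrow> nat \<Rightarrow> 'f::{field,finite}" and B :: "'a set"
  assumes M: "matroid E I" and rep: "represents v E I" and BE: "B \<subseteq> E" and IB: "I B"
    and Bmax: "\<forall>X. I X \<longrightarrow> card X \<le> card B"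
begin

lemma finE: "finite E" using M unfolding matroid_def by blast
lemma finB: "finite B" using BE finE finite_subset by blast
lemma down: "I Y \<Longrightarrow> X \<subseteq> Y \<Longrightarrow> I X" using M unfolding matroid_def by blast
lemma IE: "I X \<Longrightarrow> X \<subseteq> E" using M unfolding matroid_def by blast
lemma indep_iff: "X \<subseteq> E \<Longrightarrow> I X \<longleftrightarrow> lin_indep_family v X" using rep unfolding represents_def by blast
lemma indB: "lin_indep_family v B" using indep_iff BE IB by blast

lemma indicator_sum: "z \<in> B \<Longrightarrow> (\<Sum>b\<in>B. (if b = z then 1 else 0) * v b i) = v z i"
proof -
  assume z: "z \<in> B"
  have "(\<Sum>b\<in>B. (if b = z then 1 else 0) * v b i) = (\<Sum>b\<in>B. (if b = z then v b i else 0))"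
    by (intro sum.cong) auto
  also have "\<dots> = v z i" using z finB by (simp add: sum.delta')
  finally show ?thesis .
qed

lemma ex_rep: "x \<in> E \<Longrightarrow> \<exists>c. \<forall>i. v x i = (\<Sum>b\<in>B. c b * v b i)"
proof -
  assume x: "x \<in> E"
  show ?thesis
  proof (cases "x \<in> B")
    case True
    then show ?thesis using indicator_sum by (intro exI[of _ "\<lambda>b. if b = x then 1 else 0"]) simp
  next
    case False
    have "\<not> I (insert x B)"
    proof
      assume "I (insert x B)"
      then have "card (insert x B) \<le> card B" using Bmax by blast
      then show False using False finB by simp
    qed
    then have "\<not> lin_indep_family v (insert x B)" using indep_iff x BE by simp
    then show ?thesis using rep_of_dep[OF finB indB False] by blast
  qed
qed

definition coord where "coord x = (SOME c. \<forall>i. v x i = (\<Sum>b\<in>B. c b * v b i))"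

lemma coord_rep: "x \<in> E \<Longrightarrow> v x i = (\<Sum>b\<in>B. coord x b * v b i)"
  using someI_ex[OF ex_rep] unfolding coord_def by blast

lemma coord_B: "z \<in> B \<Longrightarrow> b \<in> B \<Longrightarrow> coord z b = (if b = z then 1 else 0)"
proof -
  assume z: "z \<in> B" and b: "b \<in> B"
  have "\<forall>i. (\<Sum>b\<in>B. coord z b * v b i) = (\<Sum>b\<in>B. (if b = z then 1 else 0) * v b i)"
    using coord_rep[of z] z BE indicator_sum[OF z] by auto
  from rep_uniq[OF indB finB this] show ?thesis using b by blast
qed

lemma part1:
  assumes S: "simple_matroid E I"
  shows "card E \<le> card (UNIV :: 'f set) ^ card B"
proof -
  have inj: "inj_on (\<lambda>x. restrict (coord x) B) E"
  proof (rule inj_onI)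
    fix x y assume x: "x \<in> E" and y: "y \<in> E" and eq: "restrict (coord x) B = restrict (coord y) B"
    have cb: "\<forall>b\<in>B. coord x b = coord y b" using eq by (metis restrict_apply')
    have vv: "\<forall>i. v x i = (\<Sum>s\<in>{y}. 1 * v s i)"
    proof
      fix i
      have "v x i = (\<Sum>b\<in>B. coord x b * v b i)" using coord_rep x by blast
      also have "\<dots> = (\<Sum>b\<in>B. coord y b * v b i)" using cb by (intro sum.cong) auto
      also have "\<dots> = v y i" using coord_rep y by simp
      finally show "v x i = (\<Sum>s\<in>{y}. 1 * v s i)" by simp
    qed
    show "x = y"
    proof (rule ccontr)
      assume ne: "x \<noteq> y"
      have "\<not> lin_indep_family v (insert x {y})" using dep_of_rep[OF _ _ vv] ne by simp
      moreover have "I {x, y}" using S x y unfolding simple_matroid_def by (simp add: card_insert_le_m1)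
      ultimately show False using indep_iff x y by simp
    qed
  qed
  have "card E = card ((\<lambda>x. restrict (coord x) B) ` E)" using card_image[OF inj] by simp
  also have "\<dots> \<le> card (UNIV :: 'f set) ^ card B" using card_restrict_image finB by blast
  finally show ?thesis .
qed

end



context msetup begin

lemma part2:
  assumes CS: "cosimple_matroid E I"
  shows "card B \<le> card (UNIV :: 'f set) ^ card (E - B)"
proof -
  have inj: "inj_on (\<lambda>b. restrict (\<lambda>y. coord y b) (E - B)) B"
  proof (rule inj_onI)
    fix b b' assume b: "b \<in> B" and b': "b' \<in> B"
      and eq: "restrict (\<lambda>y. coord y b) (E - B) = restrict (\<lambda>y. coord y b') (E - B)"
    have cb: "\<forall>y\<in>E - B. coord y b = coord y b'" using eq by (metis restrict_apply')
    show "b = b'"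
    proof (rule ccontr)
      assume ne: "b \<noteq> b'"
      have c2: "card {b, b'} \<le> 2" using ne by simp
      have "{b, b'} \<subseteq> E" using b b' BE by blast
      then have "dual_indep E I {b, b'}" using CS c2 unfolding cosimple_matroid_def simple_matroid_def
        by blast
      then obtain B' where bas: "is_basis I B'" and dis: "b \<notin> B'" "b' \<notin> B'"
        unfolding dual_indep_def by blast
      have IB': "I B'" using bas unfolding is_basis_def by blast
      have B'E: "B' \<subseteq> E" using IE IB' .
      have finB': "finite B'" using B'E finE finite_subset by blast
      have "\<not> I (insert b B')"
      proof
        assume "I (insert b B')"
        then have "insert b B' = B'" using bas unfolding is_basis_def by blast
        then show False using dis by blast
      qed
      then have "\<not> lin_indep_family v (insert b B')" using indep_iff B'E b BE by auto
      then obtain \<beta> where beta: "\<forall>i. v b i = (\<Sum>z\<in>B'. \<beta> z * v z i)"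
        using rep_of_dep[OF finB' _ dis(1)] indep_iff[OF B'E] IB' by blast
      have zz: "\<forall>z\<in>B'. coord z b = coord z b'"
      proof
        fix z assume z: "z \<in> B'"
        show "coord z b = coord z b'"
        proof (cases "z \<in> B")
          case True
          then show ?thesis using coord_B[OF True b] coord_B[OF True b'] z dis by auto
        next
          case False
          then show ?thesis using cb z B'E by blast
        qed
      qed
      have "\<forall>i. (\<Sum>c\<in>B. (\<Sum>z\<in>B'. \<beta> z * coord z c) * v c i) = (\<Sum>c\<in>B. (if c = b then 1 else 0) * v c i)"
      proof
        fix i
        have "(\<Sum>c\<in>B. (\<Sum>z\<in>B'. \<beta> z * coord z c) * v c i) = (\<Sum>c\<in>B. \<Sum>z\<in>B'. \<beta> z * coord z c * v c i)"
          by (simp add: sum_distrib_right)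
        also have "\<dots> = (\<Sum>z\<in>B'. \<Sum>c\<in>B. \<beta> z * coord z c * v c i)" by (rule sum.swap)
        also have "\<dots> = (\<Sum>z\<in>B'. \<beta> z * (\<Sum>c\<in>B. coord z c * v c i))"
          by (simp add: sum_distrib_left mult.assoc)
        also have "\<dots> = (\<Sum>z\<in>B'. \<beta> z * v z i)"
          using B'E by (intro sum.cong) (auto simp: coord_rep)
        also have "\<dots> = v b i" using beta by simp
        also have "\<dots> = (\<Sum>c\<in>B. (if c = b then 1 else 0) * v c i)" using indicator_sum[OF b] by simp
        finally show "(\<Sum>c\<in>B. (\<Sum>z\<in>B'. \<beta> z * coord z c) * v c i) = (\<Sum>c\<in>B. (if c = b then 1 else 0) * v c i)" .
      qed
      from rep_uniq[OF indB finB this] have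
        e1: "(\<Sum>z\<in>B'. \<beta> z * coord z b) = 1" and e2: "(\<Sum>z\<in>B'. \<beta> z * coord z b') = 0"
        using b b' ne by auto
      have "(\<Sum>z\<in>B'. \<beta> z * coord z b) = (\<Sum>z\<in>B'. \<beta> z * coord z b')"
        using zz by (intro sum.cong) auto
      then show False using e1 e2 by simp
    qed
  qed
  have "card B = card ((\<lambda>b. restrict (\<lambda>y. coord y b) (E - B)) ` B)" using card_image[OF inj] by simp
  also have "\<dots> \<le> card (UNIV :: 'f set) ^ card (E - B)" using card_restrict_image[of "E - B" "\<lambda>b y. coord y b" B] finE by simp
  finally show ?thesis .
qed

end



context msetup begin

lemma split_H: "H \<subseteq> B \<Longrightarrow> (\<forall>h\<in>H. c h = 0) \<Longrightarrow> (\<Sum>b\<in>B. c b * v b i) = (\<Sum>b\<in>B - H. c b * v b i)"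
proof -
  assume H: "H \<subseteq> B" and z: "\<forall>h\<in>H. c h = 0"
  have "(\<Sum>b\<in>B. c b * v b i) = (\<Sum>b\<in>B - H. c b * v b i) + (\<Sum>b\<in>H. c b * v b i)"
    using sum.subset_diff[OF H finB] .
  also have "(\<Sum>b\<in>H. c b * v b i) = 0" using z by simp
  finally show ?thesis by simp
qed

lemma part3:
  assumes KL: "kl_uniform k l E I" and kB: "k + 1 \<le> card B"
  shows "card E \<le> card B + card (UNIV :: 'f set) ^ (k + 1) * l"
proof -
  obtain H where H: "H \<subseteq> B" "card H = k + 1" using obtain_subset_with_card_n[OF kB] by blast
  define G0 where "G0 = B - H"
  have finH: "finite H" using H finB finite_subset by blast
  have cG0: "card G0 = card B - (k + 1)" unfolding G0_def using card_Diff_subset[OF finH H(1)] H(2) by simp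
  have G0B: "G0 \<subseteq> B" unfolding G0_def by blast
  have IG0: "I G0" using down IB G0B by blast
  have finG0: "finite G0" using G0B finB finite_subset by blast
  have G0E: "G0 \<subseteq> E" using G0B BE by blast
  have linG0: "lin_indep_family v G0" using indep_iff G0E IG0 by blast
  define key where "key x = restrict (coord x) H" for x
  define z0 :: "'a \<Rightarrow> 'f" where "z0 = restrict (\<lambda>_. 0) H"
  have keyeq: "key x = key y \<Longrightarrow> h \<in> H \<Longrightarrow> coord x h = coord y h" for x y h
    unfolding key_def by (metis restrict_apply')
  have keyz0: "key x = z0 \<Longrightarrow> h \<in> H \<Longrightarrow> coord x h = 0" for x h
    unfolding key_def z0_def by (metis restrict_apply')
  have cl: "card ({x\<in>E. key x = \<kappa>} - G0) \<le> l" for \<kappa>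
  proof (rule ccontr)
    define P where "P = {x\<in>E. key x = \<kappa>} - G0"
    assume "\<not> card ({x\<in>E. key x = \<kappa>} - G0) \<le> l"
    then have big: "l < card P" unfolding P_def by simp
    have finP: "finite P" unfolding P_def using finE by simp
    have PE: "P \<subseteq> E" unfolding P_def by blast
    show False
    proof (cases "\<kappa> = z0")
      case True
      obtain Y where Y: "Y \<subseteq> P" "card Y = l" using obtain_subset_with_card_n[of l P] big by auto
      have depY: "\<forall>y\<in>Y. \<not> I (insert y G0)"
      proof
        fix y assume y: "y \<in> Y"
        have yE: "y \<in> E" and ky: "key y = z0" and yG: "y \<notin> G0" using y Y True unfolding P_def by auto
        have "\<forall>i. v y i = (\<Sum>b\<in>G0. coord y b * v b i)"
          using coord_rep[OF yE] split_H[OF H(1), of "coord y"] keyz0[OF ky] unfolding G0_def by auto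
        then have "\<not> lin_indep_family v (insert y G0)" using dep_of_rep[OF finG0 yG] by blast
        then show "\<not> I (insert y G0)" using indep_iff G0E yE by auto
      qed
      have "card G0 + k \<le> card B" using cG0 kB by simp
      then obtain X where X: "X \<subseteq> B - G0" "card X = k" "I (G0 \<union> X)" using augment[OF M IG0 IB] by blast
      have XY: "X \<inter> Y = {}"
      proof (rule ccontr)
        assume "X \<inter> Y \<noteq> {}"
        then obtain y where "y \<in> X" "y \<in> Y" by blast
        then have "I (insert y G0)" using X(3) down by blast
        then show False using depY \<open>y \<in> Y\<close> by blast
      qed
      have "\<not> kl_uniform k l E I"
        apply (rule minor_lemma[OF M G0E _ _ _ _ XY X(2) Y(2) X(3) depY])
        using X Y PE BE unfolding P_def by auto
      then show False using KL by blast
    next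
      case False
      have "P \<noteq> {}" using big by auto
      then obtain x0 where x0: "x0 \<in> P" by blast
      have x0E: "x0 \<in> E" and kx0: "key x0 = \<kappa>" and x0G: "x0 \<notin> G0" using x0 unfolding P_def by auto
      have "card (P - {x0}) = card P - 1" using x0 finP by simp
      then have "l \<le> card (P - {x0})" using big by simp
      then obtain Y where Y: "Y \<subseteq> P - {x0}" "card Y = l" using obtain_subset_with_card_n by blast
      define C where "C = insert x0 G0"
      have CE: "C \<subseteq> E" unfolding C_def using x0E G0E by blast
      have IC: "I C"
      proof (rule ccontr)
        assume "\<not> I C"
        then have "\<not> lin_indep_family v (insert x0 G0)" using indep_iff CE unfolding C_def by blast
        then obtain c where c: "\<forall>i. v x0 i = (\<Sum>b\<in>G0. c b * v b i)"
          using rep_of_dep[OF finG0 linG0 x0G] by blast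
        define c' where "c' b = (if b \<in> G0 then c b else 0)" for b
        have "\<forall>i. (\<Sum>b\<in>B. coord x0 b * v b i) = (\<Sum>b\<in>B. c' b * v b i)"
        proof
          fix i
          have "(\<Sum>b\<in>B. c' b * v b i) = (\<Sum>b\<in>G0. c' b * v b i)"
            using split_H[OF H(1), of c' i] unfolding c'_def G0_def by auto
          also have "\<dots> = (\<Sum>b\<in>G0. c b * v b i)" unfolding c'_def by (intro sum.cong) auto
          finally show "(\<Sum>b\<in>B. coord x0 b * v b i) = (\<Sum>b\<in>B. c' b * v b i)"
            using c coord_rep[OF x0E] by simp
        qed
        from rep_uniq[OF indB finB this] have "\<forall>h\<in>H. coord x0 h = 0"
          using H(1) unfolding c'_def G0_def by auto
        then have "key x0 = z0" unfolding key_def z0_def by (intro restrict_ext) auto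
        then show False using kx0 False by simp
      qed
      have depY: "\<forall>y\<in>Y. \<not> I (insert y C)"
      proof
        fix y assume y: "y \<in> Y"
        have yE: "y \<in> E" and ky: "key y = key x0" and yG: "y \<notin> G0" and yx: "y \<noteq> x0"
          using y Y kx0 unfolding P_def by auto
        define d where "d z = (if z = x0 then 1 else coord y z - coord x0 z)" for z
        have "\<forall>i. v y i = (\<Sum>z\<in>C. d z * v z i)"
        proof
          fix i
          have "v y i - v x0 i = (\<Sum>b\<in>B. (coord y b - coord x0 b) * v b i)"
            using coord_rep[OF yE] coord_rep[OF x0E] by (simp add: left_diff_distrib sum_subtractf)
          also have "\<dots> = (\<Sum>b\<in>G0. (coord y b - coord x0 b) * v b i)"
            using split_H[OF H(1), of "\<lambda>b. coord y b - coord x0 b" i] keyeq[OF ky] unfolding G0_def by auto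
          also have "\<dots> = (\<Sum>b\<in>G0. d b * v b i)" unfolding d_def using x0G by (intro sum.cong) auto
          finally have "v y i = v x0 i + (\<Sum>b\<in>G0. d b * v b i)" by (simp add: algebra_simps)
          also have "\<dots> = (\<Sum>z\<in>C. d z * v z i)" unfolding C_def using finG0 x0G by (simp add: d_def)
          finally show "v y i = (\<Sum>z\<in>C. d z * v z i)" .
        qed
        moreover have "finite C" unfolding C_def using finG0 by simp
        moreover have "y \<notin> C" unfolding C_def using yG yx by simp
        ultimately have "\<not> lin_indep_family v (insert y C)" by (intro dep_of_rep)
        then show "\<not> I (insert y C)" using indep_iff CE yE by auto
      qed
      have "card C = card G0 + 1" unfolding C_def using finG0 x0G by simp
      then have "card C + k \<le> card B" using cG0 kB by simp
      then obtain X where X: "X \<subseteq> B - C" "card X = k" "I (C \<union> X)" using augment[OF M IC IB] by blast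
      have XY: "X \<inter> Y = {}"
      proof (rule ccontr)
        assume "X \<inter> Y \<noteq> {}"
        then obtain y where "y \<in> X" "y \<in> Y" by blast
        then have "I (insert y C)" using X(3) down by blast
        then show False using depY \<open>y \<in> Y\<close> by blast
      qed
      have "\<not> kl_uniform k l E I"
        apply (rule minor_lemma[OF M CE _ _ _ _ XY X(2) Y(2) X(3) depY])
        using X Y PE BE x0G unfolding P_def C_def by auto
      then show False using KL by blast
    qed
  qed
  have cover: "E \<subseteq> G0 \<union> (\<Union>\<kappa>\<in>key ` E. {x\<in>E. key x = \<kappa>} - G0)" by blast
  have fK: "finite (key ` E)" using finE by simp
  have "card E \<le> card (G0 \<union> (\<Union>\<kappa>\<in>key ` E. {x\<in>E. key x = \<kappa>} - G0))"
    using card_mono[OF _ cover] finE finG0 by simp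
  also have "\<dots> \<le> card G0 + card (\<Union>\<kappa>\<in>key ` E. {x\<in>E. key x = \<kappa>} - G0)" by (rule card_Un_le)
  also have "card (\<Union>\<kappa>\<in>key ` E. {x\<in>E. key x = \<kappa>} - G0) \<le> (\<Sum>\<kappa>\<in>key ` E. card ({x\<in>E. key x = \<kappa>} - G0))"
    using card_UN_le[OF fK] by blast
  also have "\<dots> \<le> card (key ` E) * l" using sum_bounded_above[of "key ` E" _ l] cl by simp
  also have "card (key ` E) \<le> card (UNIV :: 'f set) ^ (k + 1)"
    using card_restrict_image[OF finH, of coord E] H(2) unfolding key_def by simp
  finally show ?thesis using cG0 by (simp add: mult_right_mono)
qed

end



lemma exists_maxB:
  assumes M: "matroid E I"
  shows "\<exists>B. B \<subseteq> E \<and> I B \<and> (\<forall>X. I X \<longrightarrow> card X \<le> card B)"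
proof -
  have finE: "finite E" using M unfolding matroid_def by blast
  have sub: "{X. I X} \<subseteq> Pow E" using M unfolding matroid_def by blast
  then have fin: "finite (card ` {X. I X})" using finE finite_subset by (metis finite_Pow_iff finite_imageI)
  have ne: "card ` {X. I X} \<noteq> {}" using M unfolding matroid_def by blast
  obtain B where B: "I B" "card B = Max (card ` {X. I X})" using Max_in[OF fin ne] by auto
  have "\<forall>X. I X \<longrightarrow> card X \<le> card B" using B Max_ge[OF fin] by auto
  then show ?thesis using B sub by blast
qed

lemma finite_indep_funs:
  assumes "finite A"
  shows "finite {I' :: 'b set \<Rightarrow> bool. \<forall>X. I' X \<longrightarrow> X \<in> A}"
proof -
  have "{I' :: 'b set \<Rightarrow> bool. \<forall>X. I' X \<longrightarrow> X \<in> A} \<subseteq> (\<lambda>S X. X \<in> S) ` Pow A"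
  proof
    fix I' :: "'b set \<Rightarrow> bool" assume "I' \<in> {I'. \<forall>X. I' X \<longrightarrow> X \<in> A}"
    then have "{X. I' X} \<in> Pow A" "I' = (\<lambda>X. X \<in> {X. I' X})" by auto
    then show "I' \<in> (\<lambda>S X. X \<in> S) ` Pow A" by blast
  qed
  then show ?thesis using assms finite_subset by blast
qed

theorem theorem1p1:
  fixes k l :: nat
  assumes "k \<ge> 1" and "l \<ge> 1"
  shows "\<exists>S :: (nat set \<times> (nat set \<Rightarrow> bool)) set. finite S \<and>
    (\<forall>(E :: 'a set) I.
       matroid E I \<and> simple_matroid E I \<and> cosimple_matroid E I \<and>
       (\<exists>v :: 'a \<Rightarrow> nat \<Rightarrow> 'f::{field,finite}. represents v E I) \<and>
       kl_uniform k l E I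
       \<longrightarrow> (\<exists>(E', I') \<in> S. matroid_iso E I E' I'))"
proof -
  define q where "q = card (UNIV :: 'f set)"
  have q1: "1 \<le> q" unfolding q_def using finite_UNIV_card_ge_0[where 'a='f] by simp
  define M1 where "M1 = q ^ (k + 1) * l"
  define N where "N = q ^ k + q ^ M1 + M1"
  define S :: "(nat set \<times> (nat set \<Rightarrow> bool)) set"
    where "S = {(E', I'). E' \<subseteq> {..<N} \<and> (\<forall>X. I' X \<longrightarrow> X \<subseteq> E')}"
  have finS: "finite S"
  proof -
    have "S \<subseteq> Pow {..<N} \<times> {I' :: nat set \<Rightarrow> bool. \<forall>X. I' X \<longrightarrow> X \<in> Pow {..<N}}"
      unfolding S_def by auto
    moreover have "finite (Pow {..<N} \<times> {I' :: nat set \<Rightarrow> bool. \<forall>X. I' X \<longrightarrow> X \<in> Pow {..<N}})"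
      using finite_indep_funs[of "Pow {..<N}"] by simp
    ultimately show ?thesis using finite_subset by blast
  qed
  have main: "\<exists>(E', I') \<in> S. matroid_iso E I E' I'"
    if M: "matroid E I" and Si: "simple_matroid E I" and CS: "cosimple_matroid E I"
      and rp: "represents (v :: 'a \<Rightarrow> nat \<Rightarrow> 'f) E I" and KL: "kl_uniform k l E I" for E :: "'a set" and I v
  proof -
    obtain B where B: "B \<subseteq> E" "I B" "\<forall>X. I X \<longrightarrow> card X \<le> card B" using exists_maxB[OF M] by blast
    interpret msetup E I v B using M rp B by unfold_locales auto
    have cardE: "card E \<le> N"
    proof (cases "card B \<le> k")
      case True
      have "card E \<le> q ^ card B" using part1[OF Si] unfolding q_def .
      also have "\<dots> \<le> q ^ k" using True q1 by (simp add: power_increasing)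
      finally show ?thesis unfolding N_def by simp
    next
      case False
      have e1: "card E \<le> card B + M1" using part3[OF KL] False unfolding M1_def q_def by simp
      have "card (E - B) = card E - card B" using card_Diff_subset[OF finB B(1)] .
      then have "card (E - B) \<le> M1" using e1 by simp
      then have "card B \<le> q ^ M1" using part2[OF CS] q1 unfolding q_def
        by (meson order_trans power_increasing)
      then show ?thesis using e1 unfolding N_def by simp
    qed
    obtain h where h: "bij_betw h {0..<card E} E" using ex_bij_betw_nat_finite[OF finE] by blast
    define g where "g = inv_into {0..<card E} h"
    have g: "bij_betw g E {0..<card E}" unfolding g_def using h by (rule bij_betw_inv_into)
    have hg: "x \<in> E \<Longrightarrow> h (g x) = x" for x unfolding g_def using h
      by (simp add: bij_betw_def f_inv_into_f)
    define E' where "E' = {0..<card E}"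
    define I' where "I' X = (X \<subseteq> E' \<and> I (h ` X))" for X
    have inS: "(E', I') \<in> S" unfolding S_def E'_def I'_def using cardE by auto
    have iso: "matroid_iso E I E' I'"
      unfolding matroid_iso_def
    proof (intro exI[of _ g] conjI allI impI)
      show "bij_betw g E E'" using g unfolding E'_def .
    next
      fix X assume X: "X \<subseteq> E"
      have "h ` g ` X = X" using hg X by (force simp: image_image)
      moreover have "g ` X \<subseteq> E'" using g X unfolding E'_def bij_betw_def by blast
      ultimately show "I X = I' (g ` X)" unfolding I'_def by simp
    qed
    show ?thesis using inS iso by blast
  qed
  show ?thesis using finS main by blast
qed

end
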